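(* Let $C:2^M\to\mathbb{R}_{\ge 0}$ be a normalized cost function. There is a unique function $P_C$ on allocations with $P_C(\vec\emptyset)=0$ such that for every allocation $\vec S=(S_1,\dots,S_n)$, $$\sum_{i\in N}\left[P_C(\vec S)-P_C(\vec S-S_i)\right]=C(\vec S).$$ Moreover, this function is given by $$P_C(\vec S)=\sum_{\emptyset\neq I\subseteq N}\frac{C\left(\bigcup_{i\in I}S_i\right)}{|I|\cdot\binom{n}{|I|}}.$$
   Context: Setting. $N=\{1,\dots,n\}$ is a set of players and $M_1,\dots,M_n$ are pairwise disjoint finite sets; $M=\bigcup_i M_i$. An allocation is a vector $\vec S=(S_1,\dots,S_n)$ with $S_i\subseteq M_i$; since the $M_i$ are disjoint, allocations are identified with subsets $\bigcup_i S_i$ of $M$, so a function on allocations is a set function on $2^M$. Set operations between allocations are componentwise, $\vec\emptyset=(\emptyset,\dots,\emptyset)$, and $\vec S-S_i$ denotes the allocation obtained from $\vec S$ by replacing its $i$-th component with $\emptyset$. A cost function $C:2^M\to\mathbb{R}_{\ge0}$ is normalized if $C(\emptyset)=0$. *)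

theory Defs
  imports Complex_Main "HOL-Library.FuncSet"
begin

text \<open>Players are 1..n; item sets M i (i in 1..n) are pairwise disjoint and finite.
 An allocation (S_1,...,S_n) with S_i a subset of M_i is identified with the set
 T = union of the S_i, a subset of the ground set M = union of the M i; then
 S_i = T \<inter> M i, and (S - S_i) is T - M i.\<close>

definition ground :: "nat \<Rightarrow> (nat \<Rightarrow> 'a set) \<Rightarrow> 'a set" where
  "ground n M = (\<Union>i\<in>{1..n}. M i)"

definition is_potential :: "nat \<Rightarrow> (nat \<Rightarrow> 'a set) \<Rightarrow> ('a set \<Rightarrow> real) \<Rightarrow> ('a set \<Rightarrow> real) \<Rightarrow> bool" where
  "is_potential n M C P \<longleftrightarrow>
     P {} = 0 \<and>
     (\<forall>T. T \<subseteq> ground n M \<longrightarrow> (\<Sum>i\<in>{1..n}. P T - P (T - (T \<inter> M i))) = C T)"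

definition P_formula :: "nat \<Rightarrow> (nat \<Rightarrow> 'a set) \<Rightarrow> ('a set \<Rightarrow> real) \<Rightarrow> 'a set \<Rightarrow> real" where
  "P_formula n M C T =
     (\<Sum>I\<in>{I. I \<subseteq> {1..n} \<and> I \<noteq> {}}.
        C (\<Union>i\<in>I. T \<inter> M i) / (real (card I) * real (n choose card I)))"

end

theory Submission
  imports Defs
begin

lemma binom_id: "Suc k * (m choose Suc k) = (m - k) * (m choose k)"
  by (metis binomial_absorb_comp binomial_absorption)

lemma key:
  fixes g :: "'b set \<Rightarrow> real"
  assumes fN: "finite N"
  shows "(\<Sum>i\<in>N. \<Sum>I\<in>{I. I \<subseteq> N \<and> i \<in> I}.
           (g I - g (I - {i})) / (real (card I) * real (card N choose card I))) = g N - g {}"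
proof -
  define m where "m = card N"
  define h where "h J = g J / real (m choose card J)" for J
  have fP: "finite (Pow N)" using fN by simp
  have A: "(\<Sum>i\<in>N. \<Sum>I\<in>{I. I \<subseteq> N \<and> i \<in> I}. g I / (real (card I) * real (m choose card I)))
        = (\<Sum>I\<in>Pow N - {{}}. h I)"
  proof -
    have "(\<Sum>i\<in>N. \<Sum>I\<in>{I. I \<subseteq> N \<and> i \<in> I}. g I / (real (card I) * real (m choose card I)))
       = (\<Sum>i\<in>N. \<Sum>I\<in>{I\<in>Pow N. i \<in> I}. g I / (real (card I) * real (m choose card I)))"
      by (intro sum.cong) auto
    also have "\<dots> = (\<Sum>I\<in>Pow N. \<Sum>i\<in>{i\<in>N. i \<in> I}. g I / (real (card I) * real (m choose card I)))"
      by (rule sum.swap_restrict[OF fN fP])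
    also have "\<dots> = (\<Sum>I\<in>Pow N. (if I = {} then 0 else h I))"
    proof (intro sum.cong refl)
      fix I assume I: "I \<in> Pow N"
      then have "{i\<in>N. i \<in> I} = I" by auto
      moreover have "finite I" using I fN finite_subset by auto
      moreover have "card I \<le> m" using I fN m_def by (simp add: card_mono)
      ultimately show "(\<Sum>i\<in>{i\<in>N. i \<in> I}. g I / (real (card I) * real (m choose card I))) = (if I = {} then 0 else h I)"
        by (auto simp: h_def)
    qed
    also have "\<dots> = (\<Sum>I\<in>Pow N - {{}}. h I)"
      by (subst sum.remove[of _ "{}"]) (use fP in auto)
    finally show ?thesis .
  qed
  have B: "(\<Sum>i\<in>N. \<Sum>I\<in>{I. I \<subseteq> N \<and> i \<in> I}. g (I - {i}) / (real (card I) * real (m choose card I)))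
        = (\<Sum>J\<in>Pow N - {N}. h J)"
  proof -
    have "(\<Sum>i\<in>N. \<Sum>I\<in>{I. I \<subseteq> N \<and> i \<in> I}. g (I - {i}) / (real (card I) * real (m choose card I)))
       = (\<Sum>i\<in>N. \<Sum>J\<in>{J\<in>Pow N. i \<notin> J}. g J / (real (Suc (card J)) * real (m choose Suc (card J))))"
    proof (rule sum.cong[OF refl])
      fix i assume i: "i \<in> N"
      show "(\<Sum>I\<in>{I. I \<subseteq> N \<and> i \<in> I}. g (I - {i}) / (real (card I) * real (m choose card I)))
         = (\<Sum>J\<in>{J\<in>Pow N. i \<notin> J}. g J / (real (Suc (card J)) * real (m choose Suc (card J))))"
      proof (rule sum.reindex_bij_witness[of _ "insert i" "\<lambda>I. I - {i}"])
        fix I assume I: "I \<in> {I. I \<subseteq> N \<and> i \<in> I}"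
        then have "finite I" using fN finite_subset by auto
        then have "card I = Suc (card (I - {i}))" using I
          by (metis (mono_tags, lifting) card_Suc_Diff1 mem_Collect_eq)
        then show "g (I - {i}) / (real (Suc (card (I - {i}))) * real (m choose Suc (card (I - {i}))))
            = g (I - {i}) / (real (card I) * real (m choose card I))"
          by simp
      qed (use i in auto)
    qed
    also have "\<dots> = (\<Sum>J\<in>Pow N. \<Sum>i\<in>{i\<in>N. i \<notin> J}. g J / (real (Suc (card J)) * real (m choose Suc (card J))))"
      by (rule sum.swap_restrict[OF fN fP])
    also have "\<dots> = (\<Sum>J\<in>Pow N. (if J = N then 0 else h J))"
    proof (intro sum.cong refl)
      fix J assume J: "J \<in> Pow N"
      then have fJ: "finite J" using fN finite_subset by auto
      have e: "{i\<in>N. i \<notin> J} = N - J" by auto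
      have c: "card (N - J) = m - card J" using J fJ m_def by (simp add: card_Diff_subset)
      show "(\<Sum>i\<in>{i\<in>N. i \<notin> J}. g J / (real (Suc (card J)) * real (m choose Suc (card J)))) = (if J = N then 0 else h J)"
      proof (cases "J = N")
        case True then show ?thesis using e by simp
      next
        case False
        then have lt: "card J < m" using J fN m_def by (simp add: psubset_card_mono psubsetI)
        have eq: "real (Suc (card J)) * real (m choose Suc (card J)) = real (m - card J) * real (m choose card J)"
          using binom_id[of "card J" m] by (metis of_nat_mult)
        have pos: "real (m - card J) > 0" using lt by simp
        have pos2: "real (m choose card J) > 0" using lt by simp
        have "(\<Sum>i\<in>{i\<in>N. i \<notin> J}. g J / (real (Suc (card J)) * real (m choose Suc (card J))))
            = real (m - card J) * (g J / (real (m - card J) * real (m choose card J)))"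
          using e c eq by simp
        also have "\<dots> = h J" using pos pos2 by (simp add: h_def)
        finally show ?thesis using False by simp
      qed
    qed
    also have "\<dots> = (\<Sum>J\<in>Pow N - {N}. h J)"
      by (subst sum.remove[of _ "N"]) (use fP in auto)
    finally show ?thesis .
  qed
  have S1: "(\<Sum>J\<in>Pow N. h J) = h {} + (\<Sum>J\<in>Pow N - {{}}. h J)"
    by (rule sum.remove) (use fP in auto)
  have S2: "(\<Sum>J\<in>Pow N. h J) = h N + (\<Sum>J\<in>Pow N - {N}. h J)"
    by (rule sum.remove) (use fP in auto)
  have "(\<Sum>i\<in>N. \<Sum>I\<in>{I. I \<subseteq> N \<and> i \<in> I}.
           (g I - g (I - {i})) / (real (card I) * real (card N choose card I)))
     = (\<Sum>i\<in>N. \<Sum>I\<in>{I. I \<subseteq> N \<and> i \<in> I}. g I / (real (card I) * real (m choose card I)))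
       - (\<Sum>i\<in>N. \<Sum>I\<in>{I. I \<subseteq> N \<and> i \<in> I}. g (I - {i}) / (real (card I) * real (m choose card I)))"
    by (simp add: m_def diff_divide_distrib sum_subtractf)
  also have "\<dots> = h N - h {}" using A B S1 S2 by simp
  also have "\<dots> = g N - g {}" using m_def by (simp add: h_def)
  finally show ?thesis .
qed


lemma ground_finite:
  assumes "\<forall>i\<in>{1..n}. finite (M i)" shows "finite (ground n M)"
  using assms by (simp add: ground_def)

lemma uniq:
  assumes fin: "\<forall>i\<in>{1..n}. finite (M i)"
    and P: "P \<in> extensional (Pow (ground n M))" "is_potential n M C P"
    and Q: "Q \<in> extensional (Pow (ground n M))" "is_potential n M C Q"
  shows "P = Q"
proof (rule extensionalityI[OF P(1) Q(1)])
  have fG: "finite (ground n M)" using ground_finite[OF fin] .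
  have main: "\<forall>T. T \<subseteq> ground n M \<longrightarrow> card T = k \<longrightarrow> P T = Q T" for k
  proof (induction k rule: less_induct)
    case (less k)
    show ?case
    proof (intro allI impI)
      fix T assume T: "T \<subseteq> ground n M" and ck: "card T = k"
      have fT: "finite T" using T fG finite_subset by auto
      show "P T = Q T"
      proof (cases "T = {}")
        case True then show ?thesis using P(2) Q(2) by (simp add: is_potential_def)
      next
        case False
        define K where "K = {i\<in>{1..n}. T \<inter> M i \<noteq> {}}"
        obtain x where x: "x \<in> T" using False by auto
        then obtain i where "i \<in> {1..n}" "x \<in> M i" using T unfolding ground_def by auto
        then have "i \<in> K" using x unfolding K_def by auto
        then have "K \<noteq> {}" by auto
        then have cK: "card K > 0" unfolding K_def by (simp add: card_gt_0_iff)
        have sm: "(\<Sum>i\<in>{1..n}. R T - R (T - (T \<inter> M i))) = (\<Sum>i\<in>K. R T - R (T - (T \<inter> M i)))" for R :: "'a set \<Rightarrow> real"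
          by (rule sum.mono_neutral_right) (auto simp: K_def)
        have IH: "P (T - (T \<inter> M i)) = Q (T - (T \<inter> M i))" if "i \<in> K" for i
        proof -
          have "T - (T \<inter> M i) \<subset> T" using that K_def by auto
          then have "card (T - (T \<inter> M i)) < k" using ck fT psubset_card_mono by blast
          moreover have "T - (T \<inter> M i) \<subseteq> ground n M" using T by auto
          ultimately show ?thesis using less.IH by blast
        qed
        have "(\<Sum>i\<in>K. P T - P (T - (T \<inter> M i))) = C T"
          using P(2) T sm[of P] by (simp add: is_potential_def)
        moreover have "(\<Sum>i\<in>K. Q T - Q (T - (T \<inter> M i))) = C T"
          using Q(2) T sm[of Q] by (simp add: is_potential_def)
        ultimately have "(\<Sum>i\<in>K. P T - P (T - (T \<inter> M i))) = (\<Sum>i\<in>K. Q T - P (T - (T \<inter> M i)))"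
          using IH by simp
        then have "real (card K) * P T = real (card K) * Q T"
          by (simp add: sum_subtractf)
        then show ?thesis using cK by simp
      qed
    qed
  qed
  fix T assume "T \<in> Pow (ground n M)"
  then show "P T = Q T" using main by blast
qed

theorem proposition3p1:
  fixes n :: nat and M :: "nat \<Rightarrow> 'a set" and C :: "'a set \<Rightarrow> real"
  assumes fin: "\<forall>i\<in>{1..n}. finite (M i)"
    and disj: "\<forall>i\<in>{1..n}. \<forall>j\<in>{1..n}. i \<noteq> j \<longrightarrow> M i \<inter> M j = {}"
    and nonneg: "\<forall>T. T \<subseteq> ground n M \<longrightarrow> C T \<ge> 0"
    and norm: "C {} = 0"
  shows "(\<exists>!P. P \<in> extensional (Pow (ground n M)) \<and> is_potential n M C P)
    \<and> is_potential n M C (restrict (P_formula n M C) (Pow (ground n M)))"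
proof -
  define N where "N = {1..n}"
  define PF where "PF = restrict (P_formula n M C) (Pow (ground n M))"
  have fNN: "finite {I. I \<subseteq> N \<and> I \<noteq> {}}" unfolding N_def by simp
  have pot: "is_potential n M C PF"
    unfolding is_potential_def
  proof (intro conjI allI impI)
    show "PF {} = 0" unfolding PF_def P_formula_def using norm by simp
  next
    fix T assume T: "T \<subseteq> ground n M"
    define g where "g I = C (\<Union>j\<in>I. T \<inter> M j)" for I
    define w where "w I = real (card I) * real (n choose card I)" for I :: "nat set"
    have PT: "PF T = (\<Sum>I\<in>{I. I \<subseteq> N \<and> I \<noteq> {}}. g I / w I)"
      using T unfolding PF_def P_formula_def g_def w_def N_def by simp
    have PTi: "PF (T - (T \<inter> M i)) = (\<Sum>I\<in>{I. I \<subseteq> N \<and> I \<noteq> {}}. g (I - {i}) / w I)"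
      if i: "i \<in> N" for i
    proof -
      have U: "(\<Union>j\<in>I. (T - (T \<inter> M i)) \<inter> M j) = (\<Union>j\<in>I - {i}. T \<inter> M j)" if "I \<subseteq> N" for I
      proof -
        have "(T - (T \<inter> M i)) \<inter> M j = T \<inter> M j" if "j \<in> I - {i}" for j
          using disj i that \<open>I \<subseteq> N\<close> unfolding N_def by blast
        then show ?thesis by auto
      qed
      have "T - (T \<inter> M i) \<in> Pow (ground n M)" using T by auto
      then have "PF (T - (T \<inter> M i)) = (\<Sum>I\<in>{I. I \<subseteq> N \<and> I \<noteq> {}}.
          C (\<Union>j\<in>I. (T - (T \<inter> M i)) \<inter> M j) / w I)"
        unfolding PF_def P_formula_def w_def N_def by simp
      also have "\<dots> = (\<Sum>I\<in>{I. I \<subseteq> N \<and> I \<noteq> {}}. g (I - {i}) / w I)"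
      proof (rule sum.cong[OF refl])
        fix I assume "I \<in> {I. I \<subseteq> N \<and> I \<noteq> {}}"
        then have "I \<subseteq> N" by simp
        then show "C (\<Union>j\<in>I. (T - (T \<inter> M i)) \<inter> M j) / w I = g (I - {i}) / w I"
          using U[of I] unfolding g_def by simp
      qed
      finally show ?thesis .
    qed
    have D: "PF T - PF (T - (T \<inter> M i)) = (\<Sum>I\<in>{I. I \<subseteq> N \<and> i \<in> I}. (g I - g (I - {i})) / w I)"
      if i: "i \<in> N" for i
    proof -
      have "PF T - PF (T - (T \<inter> M i)) = (\<Sum>I\<in>{I. I \<subseteq> N \<and> I \<noteq> {}}. (g I - g (I - {i})) / w I)"
        using PT PTi[OF i] by (simp add: diff_divide_distrib sum_subtractf)
      also have "\<dots> = (\<Sum>I\<in>{I. I \<subseteq> N \<and> i \<in> I}. (g I - g (I - {i})) / w I)"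
        by (rule sum.mono_neutral_right[OF fNN]) auto
      finally show ?thesis .
    qed
    have "(\<Sum>i\<in>N. PF T - PF (T - (T \<inter> M i))) = (\<Sum>i\<in>N. \<Sum>I\<in>{I. I \<subseteq> N \<and> i \<in> I}. (g I - g (I - {i})) / w I)"
      using D by simp
    also have "\<dots> = g N - g {}"
      using key[of N g] unfolding w_def N_def by simp
    also have "\<dots> = C T"
    proof -
      have "(\<Union>j\<in>N. T \<inter> M j) = T" using T unfolding ground_def N_def by auto
      then show ?thesis using norm by (simp add: g_def)
    qed
    finally show "(\<Sum>i\<in>{1..n}. PF T - PF (T - (T \<inter> M i))) = C T" unfolding N_def .
  qed
  have ext: "PF \<in> extensional (Pow (ground n M))" unfolding PF_def by simp
  have "\<exists>!P. P \<in> extensional (Pow (ground n M)) \<and> is_potential n M C P"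
    using ext pot uniq[OF fin] by blast
  then show ?thesis using pot unfolding PF_def by simp
qed

end
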